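(* Let $\mathcal V=\{1,\dots,V\}$, $L\ge2$, integers $1\le K<V$, distinct positions $l_1,l_2\in\{1,\dots,L\}$, $\rho\in(0,1)$ with $\rho K\in\mathbb N$, $\mu=\rho/(1-\rho)$, $a\in[\rho,1]$, $b=\mu(1-a)$, and $\epsilon\in[0,1/2]$. Let $P$ be the distribution on $\mathcal V^L$ with $P(\mathbf x)=\prod_{l=1}^L P(x_l\mid\mathbf x_{<l})$, where for every $l$ and every context $\mathbf x_{<l}$, $P(\cdot\mid\mathbf x_{<l})$ is uniform on a set $\mathcal S(\mathbf x_{<l})\subset\mathcal V$ of size $K$, with $\mathcal S(\mathbf x_{<l_1})=\{1,\dots,K\}$ for all contexts at position $l_1$. Let $Q$ be the autoregressive distribution whose conditionals equal those of $P$ at every position $l\notin\{l_1,l_2\}$ and every context, and for every context satisfy $$Q(x\mid\mathbf x_{<l_1})=\begin{cases}\frac{a}{\rho K}& x\in\{1,\dots,\rho K\}\\ \frac{b}{\rho K}& x\in\{\rho K+1,\dots,K\}\\ 0&\text{otherwise,}\end{cases}\qquad Q(x\mid\mathbf x_{<l_2})=\begin{cases}\frac{1-\epsilon}{K}& x\in\mathcal S(\mathbf x_{<l_2})\\ \frac{\epsilon}{V-K}&\text{otherwise.}\end{cases}$$ For $t>0$ let $\tau=1/t$ and let $Q^t$ be the tempered distribution $Q^t(\mathbf x)=\prod_{l}Q(x_l\mid\mathbf x_{<l})^{\tau}/\sum_{y\in\mathcal V}Q(y\mid\mathbf x_{<l})^{\tau}$ (with $0^\tau=0$). Set $$F=\frac{(1-\epsilon)^{\tau}}{(1-\epsilon)^{\tau}+(V/K-1)^{1-\tau}\epsilon^{\tau}},\quad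 \lambda^t_{\min}=\frac{1}{1-\rho}\,\frac{(1-a)^{\tau}}{(1-a)^{\tau}+\mu^{1-\tau}a^{\tau}}\,F,\quad \lambda^t_{\max}=\frac{\mu^{-\tau}}{1-\rho}\,\frac{a^{\tau}}{(1-a)^{\tau}+\mu^{1-\tau}a^{\tau}}\,F.$$ Then: (i) for all $\lambda\ge\lambda^t_{\max}$: $\alpha_\lambda(P\Vert Q^t)=F$ and $\beta_\lambda(P\Vert Q^t)=F/\lambda$; (ii) for all $\lambda\in[\lambda^t_{\min},\lambda^t_{\max}]$ with $\lambda>0$: $\alpha_\lambda(P\Vert Q^t)=\rho\lambda+\frac{(1-a)^{\tau}}{(1-a)^{\tau}+\mu^{1-\tau}a^{\tau}}F$ and $\beta_\lambda(P\Vert Q^t)=\rho+\frac1\lambda\frac{(1-a)^{\tau}}{(1-a)^{\tau}+\mu^{1-\tau}a^{\tau}}F$; (iii) for all $0<\lambda\le\lambda^t_{\min}$: $\alpha_\lambda(P\Vert Q^t)=\lambda$ and $\beta_\lambda(P\Vert Q^t)=1$.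
   Context: For distributions $P,Q$ on $\mathcal V^L$ and $\lambda>0$: $\alpha_\lambda(P\Vert Q)=\sum_{\mathbf x}\min(\lambda P(\mathbf x),Q(\mathbf x))$ (Precision) and $\beta_\lambda(P\Vert Q)=\sum_{\mathbf x}\min(P(\mathbf x),Q(\mathbf x)/\lambda)$ (Recall). $\mathbf x_{<l}=(x_1,\dots,x_{l-1})$. Note that $b=\mu(1-a)$ is exactly the value making $Q(\cdot\mid\mathbf x_{<l_1})$ sum to one. *)

theory Defs
  imports Complex_Main
begin

text \<open>Vocabulary is {1..V}; a sequence in V^L is a list of length L with entries in {1..V}.
  Position l (1-based) has token xs ! (l-1) and context x_{<l} = take (l-1) xs.\<close>

definition seqs :: "nat \<Rightarrow> nat \<Rightarrow> nat list set" where
  "seqs V L = {xs. length xs = L \<and> set xs \<subseteq> {1..V}}"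

definition ar_dist :: "(nat list \<Rightarrow> nat \<Rightarrow> real) \<Rightarrow> nat \<Rightarrow> nat list \<Rightarrow> real" where
  "ar_dist cond L xs = (\<Prod>l\<in>{1..L}. cond (take (l - 1) xs) (xs ! (l - 1)))"

text \<open>Tempered conditional with exponent tau (0 powr tau = 0).\<close>
definition tempered :: "nat \<Rightarrow> real \<Rightarrow> (nat list \<Rightarrow> nat \<Rightarrow> real) \<Rightarrow> nat list \<Rightarrow> nat \<Rightarrow> real" where
  "tempered V \<tau> cond c x = cond c x powr \<tau> / (\<Sum>y\<in>{1..V}. cond c y powr \<tau>)"

definition precision :: "real \<Rightarrow> ('a \<Rightarrow> real) \<Rightarrow> ('a \<Rightarrow> real) \<Rightarrow> 'a set \<Rightarrow> real" where
  "precision lam P Q X = (\<Sum>x\<in>X. min (lam * P x) (Q x))"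

definition recall :: "real \<Rightarrow> ('a \<Rightarrow> real) \<Rightarrow> ('a \<Rightarrow> real) \<Rightarrow> 'a set \<Rightarrow> real" where
  "recall lam P Q X = (\<Sum>x\<in>X. min (P x) (Q x / lam))"

end

theory Submission
  imports Defs
begin

lemma finite_seqs: "finite (seqs V n)"
  unfolding seqs_def using finite_lists_length_eq[of "{1..V}" n] by (simp add: conj_commute)

lemma seqs_Suc: "seqs V (Suc n) = (\<lambda>(xs,y). xs @ [y]) ` (seqs V n \<times> {1..V})"
proof
  show "seqs V (Suc n) \<subseteq> (\<lambda>(xs,y). xs @ [y]) ` (seqs V n \<times> {1..V})"
  proof
    fix zs assume z: "zs \<in> seqs V (Suc n)"
    then have "zs \<noteq> []" by (auto simp: seqs_def)
    then have "zs = butlast zs @ [last zs]" by simp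
    moreover have "butlast zs \<in> seqs V n" "last zs \<in> {1..V}" using z \<open>zs \<noteq> []\<close>
      by (auto simp: seqs_def dest: in_set_butlastD) (metis atLeastAtMost_iff last_in_set subsetD)+
    ultimately show "zs \<in> (\<lambda>(xs,y). xs @ [y]) ` (seqs V n \<times> {1..V})"
      by (metis (no_types, lifting) SigmaI case_prod_conv image_eqI)
  qed
qed (auto simp: seqs_def)

lemma inj_snoc: "inj_on (\<lambda>(xs,y). xs @ [y]) A"
  by (auto simp: inj_on_def)

lemma ar_snoc:
  assumes "length xs = n"
  shows "ar_dist cond (Suc n) (xs @ [y]) = ar_dist cond n xs * cond xs y"
proof -
  have "ar_dist cond (Suc n) (xs @ [y]) =
      (\<Prod>l\<in>{1..n}. cond (take (l - 1) (xs@[y])) ((xs@[y]) ! (l - 1))) * cond xs y"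
    unfolding ar_dist_def using assms by (simp add: atLeastAtMostSuc_conv mult.commute nth_append)
  also have "(\<Prod>l\<in>{1..n}. cond (take (l - 1) (xs@[y])) ((xs@[y]) ! (l - 1))) = ar_dist cond n xs"
    unfolding ar_dist_def using assms by (intro prod.cong) (auto simp: nth_append)
  finally show ?thesis .
qed

lemma sum_seqs_Suc:
  "(\<Sum>zs\<in>seqs V (Suc n). f zs) = (\<Sum>xs\<in>seqs V n. \<Sum>y\<in>{1..V}. f (xs @ [y]))"
  unfolding seqs_Suc sum.reindex[OF inj_snoc] sum.cartesian_product by (simp add: split_def)

lemma prefix_sum:
  assumes norm: "\<And>c. length c < n \<Longrightarrow> set c \<subseteq> {1..V} \<Longrightarrow> (\<Sum>y\<in>{1..V}. cond c y) = 1"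
  and "k \<le> n"
  shows "(\<Sum>xs\<in>seqs V n. ar_dist cond n xs * g (take k xs)) = (\<Sum>xs\<in>seqs V k. ar_dist cond k xs * g xs)"
  using assms
proof (induction n)
  case 0
  then show ?case by (auto simp: seqs_def intro!: sum.cong)
next
  case (Suc n)
  show ?case
  proof (cases "k = Suc n")
    case True
    then show ?thesis by (auto simp: seqs_def intro!: sum.cong)
  next
    case False
    then have k: "k \<le> n" using Suc.prems by simp
    have "(\<Sum>xs\<in>seqs V (Suc n). ar_dist cond (Suc n) xs * g (take k xs))
        = (\<Sum>xs\<in>seqs V n. \<Sum>y\<in>{1..V}. ar_dist cond n xs * g (take k xs) * cond xs y)"
      unfolding sum_seqs_Suc
      by (intro sum.cong refl) (use k in \<open>auto simp: seqs_def ar_snoc\<close>)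
    also have "\<dots> = (\<Sum>xs\<in>seqs V n. ar_dist cond n xs * g (take k xs) * (\<Sum>y\<in>{1..V}. cond xs y))"
      by (simp add: sum_distrib_left)
    also have "\<dots> = (\<Sum>xs\<in>seqs V n. ar_dist cond n xs * g (take k xs))"
      by (intro sum.cong refl) (use Suc.prems in \<open>auto simp: seqs_def\<close>)
    also have "\<dots> = (\<Sum>xs\<in>seqs V k. ar_dist cond k xs * g xs)"
      using Suc.IH Suc.prems k by auto
    finally show ?thesis .
  qed
qed

lemma total_one:
  assumes norm: "\<And>c. length c < n \<Longrightarrow> set c \<subseteq> {1..V} \<Longrightarrow> (\<Sum>y\<in>{1..V}. cond c y) = 1"
  shows "(\<Sum>xs\<in>seqs V n. ar_dist cond n xs) = 1"
proof -
  have "(\<Sum>xs\<in>seqs V n. ar_dist cond n xs * (\<lambda>_. 1) (take 0 xs)) = (\<Sum>xs\<in>seqs V 0. ar_dist cond 0 xs * (\<lambda>_. 1) xs)"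
    by (rule prefix_sum) (use norm in auto)
  moreover have "seqs V 0 = {[]}" by (auto simp: seqs_def)
  ultimately show ?thesis by (simp add: ar_dist_def)
qed

lemma marginal:
  assumes norm: "\<And>c. length c < n \<Longrightarrow> set c \<subseteq> {1..V} \<Longrightarrow> (\<Sum>y\<in>{1..V}. cond c y) = 1"
  and l: "1 \<le> l" "l \<le> n"
  and p: "\<And>c y. length c = l - 1 \<Longrightarrow> set c \<subseteq> {1..V} \<Longrightarrow> cond c y = p y"
  shows "(\<Sum>xs\<in>seqs V n. ar_dist cond n xs * h (xs ! (l - 1))) = (\<Sum>y\<in>{1..V}. p y * h y)"
proof -
  obtain j where j: "l = Suc j" using l by (cases l) auto
  have "(\<Sum>xs\<in>seqs V n. ar_dist cond n xs * h (xs ! (l - 1)))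
      = (\<Sum>xs\<in>seqs V n. ar_dist cond n xs * (\<lambda>ys. h (ys ! (l - 1))) (take l xs))"
    using l by (intro sum.cong refl) (auto simp: seqs_def)
  also have "\<dots> = (\<Sum>xs\<in>seqs V l. ar_dist cond l xs * h (xs ! (l - 1)))"
    by (rule prefix_sum[OF norm l(2)]) auto
  also have "\<dots> = (\<Sum>xs\<in>seqs V j. \<Sum>y\<in>{1..V}. ar_dist cond j xs * (p y * h y))"
    unfolding j sum_seqs_Suc
    by (intro sum.cong refl) (auto simp: seqs_def ar_snoc p j nth_append)
  also have "\<dots> = (\<Sum>xs\<in>seqs V j. ar_dist cond j xs) * (\<Sum>y\<in>{1..V}. p y * h y)"
    by (rule sum_product[symmetric])
  also have "(\<Sum>xs\<in>seqs V j. ar_dist cond j xs) = 1"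
    by (rule total_one) (use norm j l in auto)
  finally show ?thesis by simp
qed


lemma sum_if_set:
  fixes g :: "nat \<Rightarrow> real"
  assumes "finite A" "X \<subseteq> A"
  shows "(\<Sum>y\<in>A. if y \<in> X then \<alpha> else g y) = real (card X) * \<alpha> + (\<Sum>y\<in>A - X. g y)"
proof -
  have "(\<Sum>y\<in>A. if y \<in> X then \<alpha> else g y) = (\<Sum>y\<in>A \<inter> {y. y \<in> X}. \<alpha>) + (\<Sum>y\<in>A \<inter> - {y. y \<in> X}. g y)"
    by (rule sum.If_cases) (rule assms)
  also have "A \<inter> {y. y \<in> X} = X" using assms by auto
  also have "A \<inter> - {y. y \<in> X} = A - X" by auto
  finally show ?thesis by simp
qed

lemma sum_split3:
  fixes \<alpha> \<beta> :: real
  assumes "m \<le> K" "K \<le> V"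
  shows "(\<Sum>y\<in>{1..V}. if y \<in> {1..m} then \<alpha> else if y \<in> {m<..K} then \<beta> else 0)
     = real m * \<alpha> + real (K - m) * \<beta>"
proof -
  have "(\<Sum>y\<in>{1..V}. if y \<in> {1..m} then \<alpha> else if y \<in> {m<..K} then \<beta> else 0)
     = real (card {1..m}) * \<alpha> + (\<Sum>y\<in>{1..V} - {1..m}. if y \<in> {m<..K} then \<beta> else 0)"
    by (rule sum_if_set) (use assms in auto)
  also have "(\<Sum>y\<in>{1..V} - {1..m}. if y \<in> {m<..K} then \<beta> else 0) = real (card {m<..K}) * \<beta> + (\<Sum>y\<in>({1..V} - {1..m}) - {m<..K}. 0)"
    by (rule sum_if_set) (use assms in auto)
  finally show ?thesis by simp
qed

lemma alg1:
  fixes K m \<rho> \<mu> Aa B1 M mt F :: real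
  assumes "K > 0" "0 < \<rho>" "\<rho> < 1" "m = \<rho> * K" "\<mu> = \<rho> / (1 - \<rho>)" "Aa > 0" "B1 \<ge> 0" "M > 0" "mt > 0"
  shows "K * (Aa / mt) / (m * (Aa / mt) + (K - m) * (M * B1 / mt)) * F = (1 / M) / (1 - \<rho>) * (Aa / (B1 + \<mu> / M * Aa)) * F"
    and "K * (M * B1 / mt) / (m * (Aa / mt) + (K - m) * (M * B1 / mt)) * F = 1 / (1 - \<rho>) * (B1 / (B1 + \<mu> / M * Aa)) * F"
proof -
  have d: "m * (Aa / mt) + (K - m) * (M * B1 / mt) = K * (\<rho> * Aa + (1 - \<rho>) * M * B1) / mt"
    using assms by (simp add: field_simps)
  have e: "B1 + \<mu> / M * Aa = (\<rho> * Aa + (1 - \<rho>) * M * B1) / ((1 - \<rho>) * M)"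
    using assms(1-4,6-9) unfolding assms(5) by (simp add: field_simps)
  define X where "X = \<rho> * Aa + (1 - \<rho>) * M * B1"
  have p: "X > 0" unfolding X_def using assms by (intro add_pos_nonneg) auto
  have r1: "(1 - \<rho>) > 0" using assms by simp
  show "K * (Aa / mt) / (m * (Aa / mt) + (K - m) * (M * B1 / mt)) * F = (1 / M) / (1 - \<rho>) * (Aa / (B1 + \<mu> / M * Aa)) * F"
    unfolding d e X_def[symmetric] using assms(1,8,9) p r1 by (simp add: field_simps)
  show "K * (M * B1 / mt) / (m * (Aa / mt) + (K - m) * (M * B1 / mt)) * F = 1 / (1 - \<rho>) * (B1 / (B1 + \<mu> / M * Aa)) * F"
    unfolding d e X_def[symmetric] using assms(1,8,9) p r1 by (simp add: field_simps)
qed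

lemma alg2:
  fixes K W E e kt vt F :: real
  assumes "K > 0" "W > 0" "E > 0" "e \<ge> 0" "kt > 0" "vt > 0"
    "F = E / (E + (W / K * kt / vt) * e)"
  shows "(E / kt) / (K * (E / kt) + W * (e / vt)) = 1 / K * F"
proof -
  have "(E / kt) / (K * (E / kt) + W * (e / vt)) = E * vt / (K * E * vt + W * e * kt)"
    using assms by (simp add: field_simps)
  moreover have "F = E * vt * K / (K * E * vt + W * e * kt)"
    using assms by (simp add: field_simps)
  moreover have "K * E * vt + W * e * kt > 0" using assms by (intro add_pos_nonneg) auto
  ultimately show ?thesis using assms by (simp add: field_simps)
qed

theorem propositionA2:
  fixes V L K l1 l2 :: nat
    and \<rho> \<mu> a b \<epsilon> t \<tau> F lmin lmax :: real
    and S :: "nat list \<Rightarrow> nat set"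
    and Pc Qc :: "nat list \<Rightarrow> nat \<Rightarrow> real"
  assumes "L \<ge> 2" and "1 \<le> K" and "K < V"
    and "l1 \<in> {1..L}" and "l2 \<in> {1..L}" and "l1 \<noteq> l2"
    and "0 < \<rho>" and "\<rho> < 1" and "\<exists>m::nat. \<rho> * real K = real m"
    and "\<mu> = \<rho> / (1 - \<rho>)"
    and "\<rho> \<le> a" and "a \<le> 1" and "b = \<mu> * (1 - a)"
    and "0 \<le> \<epsilon>" and "\<epsilon> \<le> 1/2"
    and S_sub: "\<And>c. length c < L \<Longrightarrow> set c \<subseteq> {1..V} \<Longrightarrow> S c \<subseteq> {1..V} \<and> card (S c) = K"
    and S_l1: "\<And>c. length c = l1 - 1 \<Longrightarrow> set c \<subseteq> {1..V} \<Longrightarrow> S c = {1..K}"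
    and Pc_def: "\<And>c x. Pc c x = (if x \<in> S c then 1 / real K else 0)"
    and Qc_def: "\<And>c x. Qc c x =
        (if length c = l1 - 1 then
           (if 1 \<le> x \<and> real x \<le> \<rho> * real K then a / (\<rho> * real K)
            else if \<rho> * real K < real x \<and> x \<le> K then b / (\<rho> * real K)
            else 0)
         else if length c = l2 - 1 then
           (if x \<in> S c then (1 - \<epsilon>) / real K
            else if x \<in> {1..V} then \<epsilon> / real (V - K) else 0)
         else Pc c x)"
    and "t > 0" and "\<tau> = 1 / t"
    and F_def: "F = (1 - \<epsilon>) powr \<tau> /
        ((1 - \<epsilon>) powr \<tau> + (real V / real K - 1) powr (1 - \<tau>) * \<epsilon> powr \<tau>)"
    and lmin_def: "lmin = 1 / (1 - \<rho>) *
        ((1 - a) powr \<tau> / ((1 - a) powr \<tau> + \<mu> powr (1 - \<tau>) * a powr \<tau>)) * F"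
    and lmax_def: "lmax = \<mu> powr (- \<tau>) / (1 - \<rho>) *
        (a powr \<tau> / ((1 - a) powr \<tau> + \<mu> powr (1 - \<tau>) * a powr \<tau>)) * F"
  shows "(\<forall>lam. lam \<ge> lmax \<longrightarrow>
            precision lam (ar_dist Pc L) (ar_dist (tempered V \<tau> Qc) L) (seqs V L) = F \<and>
            recall lam (ar_dist Pc L) (ar_dist (tempered V \<tau> Qc) L) (seqs V L) = F / lam)
       \<and> (\<forall>lam. lmin \<le> lam \<and> lam \<le> lmax \<and> lam > 0 \<longrightarrow>
            precision lam (ar_dist Pc L) (ar_dist (tempered V \<tau> Qc) L) (seqs V L) =
              \<rho> * lam + (1 - a) powr \<tau> / ((1 - a) powr \<tau> + \<mu> powr (1 - \<tau>) * a powr \<tau>) * F \<and>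
            recall lam (ar_dist Pc L) (ar_dist (tempered V \<tau> Qc) L) (seqs V L) =
              \<rho> + 1 / lam * ((1 - a) powr \<tau> / ((1 - a) powr \<tau> + \<mu> powr (1 - \<tau>) * a powr \<tau>) * F))
       \<and> (\<forall>lam. 0 < lam \<and> lam \<le> lmin \<longrightarrow>
            precision lam (ar_dist Pc L) (ar_dist (tempered V \<tau> Qc) L) (seqs V L) = lam \<and>
            recall lam (ar_dist Pc L) (ar_dist (tempered V \<tau> Qc) L) (seqs V L) = 1)"
proof -
  note A = assms
  obtain m :: nat where m: "\<rho> * real K = real m" using A(9) by blast
  have Kpos: "real K > 0" using A(2) by simp
  have mpos: "real m > 0" using m A(7) Kpos by (metis mult_pos_pos)
  have mK: "m < K" proof -
    have "\<rho> * real K < 1 * real K" using A(8) Kpos by (intro mult_strict_right_mono) auto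
    then show ?thesis using m by simp
  qed
  have KV: "K \<le> V" using A(3) by simp
  have mu_pos: "\<mu> > 0" using A(7,8,10) by simp
  have a_pos: "a > 0" using A(7,11) by simp
  have b_nn: "b \<ge> 0" using A(12,13) mu_pos by simp
  have tau_pos: "\<tau> > 0" using A(20,21) by simp
  have rhoK_iff: "\<And>y::nat. (real y \<le> \<rho> * real K) = (y \<le> m)" using m by simp
  have rhoK_iff2: "\<And>y::nat. (\<rho> * real K < real y) = (m < y)" using m by simp
  define Z1 where "Z1 = real m * (a / real m) powr \<tau> + real (K - m) * (b / real m) powr \<tau>"
  define R1 where "R1 = real K * (a / real m) powr \<tau> / Z1"
  define R2 where "R2 = real K * (b / real m) powr \<tau> / Z1"
  define r where "r = (\<lambda>y::nat. if y \<le> m then R1 else R2)"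
  define Z2 where "Z2 = real K * ((1 - \<epsilon>) / real K) powr \<tau> + real (V - K) * (\<epsilon> / real (V - K)) powr \<tau>"
  define Aa where "Aa = a powr \<tau>"
  define B1 where "B1 = (1 - a) powr \<tau>"
  define M where "M = \<mu> powr \<tau>"
  define mt where "mt = real m powr \<tau>"
  have Aa_pos: "Aa > 0" unfolding Aa_def using a_pos by simp
  have B1_nn: "B1 \<ge> 0" unfolding B1_def by simp
  have M_pos: "M > 0" unfolding M_def using mu_pos by simp
  have mt_pos: "mt > 0" unfolding mt_def using mpos by simp
  have am: "(a / real m) powr \<tau> = Aa / mt" unfolding Aa_def mt_def by (rule powr_divide)
  have bm: "(b / real m) powr \<tau> = M * B1 / mt" unfolding M_def B1_def mt_def A(13)
    by (simp add: powr_divide powr_mult)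
  have mu1: "\<mu> powr (1 - \<tau>) = \<mu> / M" unfolding M_def using mu_pos by (simp add: powr_diff)
  have mum: "\<mu> powr (- \<tau>) = 1 / M" unfolding M_def by (rule powr_minus_divide)
  have Km: "real (K - m) = real K - real m" using mK by simp
  have mrho: "real m = \<rho> * real K" using m by simp
  have Fpos: "F > 0" unfolding F_def using A(15)
    by (intro divide_pos_pos add_pos_nonneg) auto
  have Z1_pos: "Z1 > 0" unfolding Z1_def am bm using mpos Aa_pos mt_pos M_pos B1_nn mK
    by (intro add_pos_nonneg) auto
  have Z2F: "((1 - \<epsilon>) / real K) powr \<tau> / Z2 = 1 / real K * F"
  proof -
    have VK: "real (V - K) > 0" using A(3) by simp
    have vk: "real V / real K - 1 = real (V - K) / real K" using A(3) Kpos by (simp add: field_simps)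
    have fe: "(real V / real K - 1) powr (1 - \<tau>) = real (V - K) / real K * (real K powr \<tau>) / (real (V - K) powr \<tau>)"
      unfolding vk using VK Kpos by (simp add: powr_diff powr_divide)
    show ?thesis unfolding Z2_def powr_divide
      by (rule alg2) (use Kpos VK A(15) in \<open>auto simp: F_def fe\<close>)
  qed
  have T1: "tempered V \<tau> Qc c x = 1 / real K * r x"
    if "length c = l1 - 1" "set c \<subseteq> {1..V}" "x \<in> S c" for c x
  proof -
    have Sc: "S c = {1..K}" using S_l1 that by simp
    have q: "Qc c y powr \<tau> = (if y \<in> {1..m} then (a / real m) powr \<tau>
        else if y \<in> {m<..K} then (b / real m) powr \<tau> else 0)" for y
      using that(1) mrho by (simp add: Qc_def m)
    have "(\<Sum>y\<in>{1..V}. Qc c y powr \<tau>) = Z1"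
      unfolding q Z1_def by (rule sum_split3) (use mK KV in auto)
    then show ?thesis using that(3) Z1_pos Kpos unfolding tempered_def q Sc r_def R1_def R2_def
      by auto
  qed
  have T2: "tempered V \<tau> Qc c x = 1 / real K * F"
    if "length c = l2 - 1" "set c \<subseteq> {1..V}" "x \<in> S c" for c x
  proof -
    have n1: "length c \<noteq> l1 - 1" using that(1) A(4,5,6) by auto
    have lc: "length c < L" using that(1) A(5) by auto
    have Ssub: "S c \<subseteq> {1..V}" "card (S c) = K" using S_sub[OF lc that(2)] by auto
    have q: "Qc c y powr \<tau> = (if y \<in> S c then ((1 - \<epsilon>) / real K) powr \<tau>
        else if y \<in> {1..V} then (\<epsilon> / real (V - K)) powr \<tau> else 0)" for y
      using that(1) n1 by (simp add: Qc_def)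
    have cd: "card ({1..V} - S c) = V - K" using Ssub card_Diff_subset[of "S c" "{1..V}"] finite_subset[OF Ssub(1)] by simp
    have "(\<Sum>y\<in>{1..V}. Qc c y powr \<tau>) = real (card (S c)) * ((1 - \<epsilon>) / real K) powr \<tau>
        + (\<Sum>y\<in>{1..V} - S c. if y \<in> {1..V} then (\<epsilon> / real (V - K)) powr \<tau> else 0)"
      unfolding q by (rule sum_if_set) (use Ssub in auto)
    also have "\<dots> = Z2" unfolding Z2_def Ssub(2) using cd by simp
    finally have "(\<Sum>y\<in>{1..V}. Qc c y powr \<tau>) = Z2" .
    then show ?thesis using that(3) Z2F unfolding tempered_def q by simp
  qed
  have T3: "tempered V \<tau> Qc c x = 1 / real K"
    if "length c < L" "length c \<noteq> l1 - 1" "length c \<noteq> l2 - 1" "set c \<subseteq> {1..V}" "x \<in> S c" for c x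
  proof -
    have Ssub: "S c \<subseteq> {1..V}" "card (S c) = K" using S_sub[of c] that by auto
    have q: "Qc c y powr \<tau> = (if y \<in> S c then (1 / real K) powr \<tau> else 0)" for y
      using that by (simp add: Qc_def Pc_def)
    have "(\<Sum>y\<in>{1..V}. Qc c y powr \<tau>) = real (card (S c)) * (1 / real K) powr \<tau> + (\<Sum>y\<in>{1..V} - S c. 0)"
      unfolding q by (rule sum_if_set) (use Ssub in auto)
    then have "(\<Sum>y\<in>{1..V}. Qc c y powr \<tau>) = real K * (1 / real K) powr \<tau>" using Ssub by simp
    then show ?thesis using that(5) Kpos unfolding tempered_def q by simp
  qed
  define P where "P = ar_dist Pc L"
  define Qt where "Qt = ar_dist (tempered V \<tau> Qc) L"
  have Qt_nn: "Qt xs \<ge> 0" for xs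
    unfolding Qt_def ar_dist_def tempered_def by (intro prod_nonneg divide_nonneg_nonneg sum_nonneg) auto
  have P_nn: "P xs \<ge> 0" for xs
    unfolding P_def ar_dist_def Pc_def by (intro prod_nonneg) auto
  have point: "Qt xs = P xs * (r (xs ! (l1 - 1)) * F)" if "xs \<in> seqs V L" "P xs \<noteq> 0" for xs
  proof -
    have len: "length xs = L" and sx: "set xs \<subseteq> {1..V}" using that(1) by (auto simp: seqs_def)
    have mem: "xs ! (l - 1) \<in> S (take (l - 1) xs)" if "l \<in> {1..L}" for l
      using \<open>P xs \<noteq> 0\<close> that unfolding P_def ar_dist_def by (auto simp: Pc_def split: if_splits)
    have ctx: "length (take (l - 1) xs) = l - 1" "set (take (l - 1) xs) \<subseteq> {1..V}" "l - 1 < L"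
      if "l \<in> {1..L}" for l
      using that len sx set_take_subset[of "l - 1" xs] by auto
    have "Qt xs = (\<Prod>l\<in>{1..L}. 1 / real K * ((if l = l1 then r (xs ! (l1 - 1)) else 1) * (if l = l2 then F else 1)))"
      unfolding Qt_def ar_dist_def
    proof (rule prod.cong[OF refl])
      fix l assume l: "l \<in> {1..L}"
      note c = ctx[OF l] and xm = mem[OF l]
      show "tempered V \<tau> Qc (take (l - 1) xs) (xs ! (l - 1)) =
          1 / real K * ((if l = l1 then r (xs ! (l1 - 1)) else 1) * (if l = l2 then F else 1))"
      proof (cases "l = l1")
        case True
        then show ?thesis using T1[of "take (l - 1) xs" "xs ! (l - 1)"] c xm A(6) by simp
      next
        case n1: False
        show ?thesis
        proof (cases "l = l2")
          case True
          then show ?thesis using T2[of "take (l - 1) xs" "xs ! (l - 1)"] c xm n1 by simp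
        next
          case False
          have "l - 1 \<noteq> l1 - 1" "l - 1 \<noteq> l2 - 1" using n1 False l A(4,5) by auto
          then show ?thesis using T3[of "take (l - 1) xs" "xs ! (l - 1)"] c xm n1 False by simp
        qed
      qed
    qed
    also have "\<dots> = (\<Prod>l\<in>{1..L}. 1 / real K) * ((\<Prod>l\<in>{1..L}. if l = l1 then r (xs ! (l1 - 1)) else 1) * (\<Prod>l\<in>{1..L}. if l = l2 then F else 1))"
      by (simp only: prod.distrib)
    also have "\<dots> = (\<Prod>l\<in>{1..L}. 1 / real K) * (r (xs ! (l1 - 1)) * F)"
      using A(4,5) by simp
    also have "(\<Prod>l\<in>{1..L}. 1 / real K) = P xs"
      unfolding P_def ar_dist_def using mem by (intro prod.cong) (auto simp: Pc_def)
    finally show ?thesis .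
  qed
  have Pc_norm: "(\<Sum>y\<in>{1..V}. Pc c y) = 1" if "length c < L" "set c \<subseteq> {1..V}" for c
  proof -
    have Ssub: "S c \<subseteq> {1..V}" "card (S c) = K" using S_sub[OF that] by auto
    have "(\<Sum>y\<in>{1..V}. Pc c y) = real (card (S c)) * (1 / real K) + (\<Sum>y\<in>{1..V} - S c. 0)"
      unfolding Pc_def by (rule sum_if_set) (use Ssub in auto)
    then show ?thesis using Ssub Kpos by simp
  qed
  have marg: "(\<Sum>xs\<in>seqs V L. P xs * h (xs ! (l1 - 1))) = \<rho> * h 1 + (1 - \<rho>) * h (Suc m)"
    if "\<And>y. 1 \<le> y \<Longrightarrow> y \<le> K \<Longrightarrow> h y = (if y \<le> m then h 1 else h (Suc m))" for h
  proof -
    have "(\<Sum>xs\<in>seqs V L. P xs * h (xs ! (l1 - 1))) =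
        (\<Sum>y\<in>{1..V}. (if y \<in> {1..K} then 1 / real K else 0) * h y)"
      unfolding P_def
    proof (rule marginal)
      show "\<And>c. length c < L \<Longrightarrow> set c \<subseteq> {1..V} \<Longrightarrow> sum (Pc c) {1..V} = 1" by (rule Pc_norm)
      show "1 \<le> l1" "l1 \<le> L" using A(4) by auto
      show "Pc c y = (if y \<in> {1..K} then 1 / real K else 0)" if "length c = l1 - 1" "set c \<subseteq> {1..V}" for c y
        using S_l1[OF that] by (simp add: Pc_def)
    qed
    also have "\<dots> = (\<Sum>y\<in>{1..V}. if y \<in> {1..m} then h 1 / real K else if y \<in> {m<..K} then h (Suc m) / real K else 0)"
    proof (intro sum.cong refl)
      fix y assume y: "y \<in> {1..V}"
      show "(if y \<in> {1..K} then 1 / real K else 0) * h y = (if y \<in> {1..m} then h 1 / real K else if y \<in> {m<..K} then h (Suc m) / real K else 0)"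
      proof (cases "y \<le> K")
        case True
        then have hy: "h y = (if y \<le> m then h 1 else h (Suc m))" using that[of y] y by auto
        show ?thesis unfolding hy using True y by auto
      next
        case False then show ?thesis using mK by auto
      qed
    qed
    also have "\<dots> = real m * (h 1 / real K) + real (K - m) * (h (Suc m) / real K)"
      by (rule sum_split3) (use mK KV in auto)
    also have "\<dots> = \<rho> * h 1 + (1 - \<rho>) * h (Suc m)"
      unfolding Km mrho using Kpos by (simp add: field_simps)
    finally show ?thesis .
  qed
  have prec: "precision lam P Qt (seqs V L) = \<rho> * min lam (R1 * F) + (1 - \<rho>) * min lam (R2 * F)"
    if "lam > 0" for lam
  proof -
    have "precision lam P Qt (seqs V L) = (\<Sum>xs\<in>seqs V L. P xs * (\<lambda>y. min lam (r y * F)) (xs ! (l1 - 1)))"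
      unfolding precision_def
    proof (rule sum.cong[OF refl])
      fix xs assume xs: "xs \<in> seqs V L"
      show "min (lam * P xs) (Qt xs) = P xs * (\<lambda>y. min lam (r y * F)) (xs ! (l1 - 1))"
      proof (cases "P xs = 0")
        case True then show ?thesis using Qt_nn[of xs] by simp
      next
        case False then show ?thesis using point[OF xs False] P_nn[of xs]
          by (simp add: min_mult_distrib_left mult.commute)
      qed
    qed
    also have "\<dots> = \<rho> * min lam (r 1 * F) + (1 - \<rho>) * min lam (r (Suc m) * F)"
      by (rule marg) (auto simp: r_def)
    finally show ?thesis using mpos by (simp add: r_def)
  qed
  have rec: "recall lam P Qt (seqs V L) = \<rho> * min 1 (R1 * F / lam) + (1 - \<rho>) * min 1 (R2 * F / lam)"
    if "lam > 0" for lam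
  proof -
    have "recall lam P Qt (seqs V L) = (\<Sum>xs\<in>seqs V L. P xs * (\<lambda>y. min 1 (r y * F / lam)) (xs ! (l1 - 1)))"
      unfolding recall_def
    proof (rule sum.cong[OF refl])
      fix xs assume xs: "xs \<in> seqs V L"
      show "min (P xs) (Qt xs / lam) = P xs * (\<lambda>y. min 1 (r y * F / lam)) (xs ! (l1 - 1))"
      proof (cases "P xs = 0")
        case True then show ?thesis using Qt_nn[of xs] that by simp
      next
        case False then show ?thesis using point[OF xs False] P_nn[of xs]
          by (simp add: min_mult_distrib_left mult.commute)
      qed
    qed
    also have "\<dots> = \<rho> * min 1 (r 1 * F / lam) + (1 - \<rho>) * min 1 (r (Suc m) * F / lam)"
      by (rule marg) (auto simp: r_def)
    finally show ?thesis using mpos by (simp add: r_def)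
  qed
  define DD where "DD = (1 - a) powr \<tau> / ((1 - a) powr \<tau> + \<mu> powr (1 - \<tau>) * a powr \<tau>)"
  have Den: "(1 - a) powr \<tau> + \<mu> powr (1 - \<tau>) * a powr \<tau> = B1 + \<mu> / M * Aa"
    unfolding B1_def Aa_def mu1 by simp
  have Den_pos: "B1 + \<mu> / M * Aa > 0" using B1_nn M_pos Aa_pos mu_pos by (intro add_nonneg_pos) auto
  have lmax': "lmax = (1 / M) / (1 - \<rho>) * (Aa / (B1 + \<mu> / M * Aa)) * F"
    unfolding lmax_def Den mum Aa_def by simp
  have lmin': "lmin = 1 / (1 - \<rho>) * (B1 / (B1 + \<mu> / M * Aa)) * F"
    unfolding lmin_def Den B1_def by simp
  have U: "R1 * F = lmax" unfolding lmax' R1_def Z1_def am bm Km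
    by (rule alg1(1)) (use Kpos A(7,8,10) mrho Aa_pos B1_nn M_pos mt_pos in auto)
  have W: "R2 * F = lmin" unfolding lmin' R2_def Z1_def am bm Km
    by (rule alg1(2)) (use Kpos A(7,8,10) mrho Aa_pos B1_nn M_pos mt_pos in auto)
  have r1: "1 - \<rho> > 0" using A(8) by simp
  have BA: "B1 * M \<le> Aa"
  proof -
    have "b \<le> a" unfolding A(13) A(10) using A(7,8,11) by (simp add: field_simps)
    then have "b powr \<tau> \<le> a powr \<tau>" using b_nn tau_pos by (intro powr_mono2) auto
    then show ?thesis unfolding A(13) B1_def M_def Aa_def by (simp add: powr_mult mult.commute)
  qed
  have WU: "lmin \<le> lmax"
  proof -
    have "B1 \<le> 1 / M * Aa" using BA M_pos by (simp add: field_simps)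
    then have "1 / (1 - \<rho>) * B1 \<le> 1 / (1 - \<rho>) * (1 / M * Aa)" using r1 by (intro mult_left_mono) auto
    then have "1 / (1 - \<rho>) * B1 / (B1 + \<mu> / M * Aa) * F \<le> 1 / (1 - \<rho>) * (1 / M * Aa) / (B1 + \<mu> / M * Aa) * F"
      using Den_pos Fpos by (intro mult_right_mono divide_right_mono) auto
    then show ?thesis unfolding lmin' lmax' by (simp add: mult_ac)
  qed
  have sumF: "\<rho> * lmax + (1 - \<rho>) * lmin = F"
  proof -
    have e1: "\<rho> * lmax = (\<mu> / M * Aa) / (B1 + \<mu> / M * Aa) * F"
      unfolding lmax' A(10) using r1 M_pos by (simp add: mult_ac)
    have e2: "(1 - \<rho>) * lmin = B1 / (B1 + \<mu> / M * Aa) * F"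
      unfolding lmin' using r1 by simp
    have "\<rho> * lmax + (1 - \<rho>) * lmin = (\<mu> / M * Aa + B1) / (B1 + \<mu> / M * Aa) * F"
      unfolding e1 e2 by (simp add: add_divide_distrib distrib_right)
    also have "\<dots> = F" using Den_pos by (simp add: add.commute)
    finally show ?thesis .
  qed
  have lmax_pos: "lmax > 0" unfolding lmax' using M_pos r1 Aa_pos Den_pos Fpos by simp
  have lminDD: "(1 - \<rho>) * lmin = DD * F" unfolding lmin_def DD_def using r1 by simp
  show ?thesis
    unfolding P_def[symmetric] Qt_def[symmetric] DD_def[symmetric]
  proof (intro conjI allI impI)
    fix lam assume h: "lam \<ge> lmax"
    then have lp: "lam > 0" using lmax_pos by linarith
    have m1: "min lam lmax = lmax" "min lam lmin = lmin" using h WU by auto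
    have m2: "min 1 (lmax / lam) = lmax / lam" "min 1 (lmin / lam) = lmin / lam"
      using h WU lp lmax_pos by (auto simp: min_def divide_le_eq_1)
    show "precision lam P Qt (seqs V L) = F" using prec[OF lp] U W m1 sumF by simp
    have "recall lam P Qt (seqs V L) = (\<rho> * lmax + (1 - \<rho>) * lmin) / lam"
      using rec[OF lp] U W m2 by (simp add: add_divide_distrib)
    then show "recall lam P Qt (seqs V L) = F / lam" using sumF by simp
  next
    fix lam assume h: "lmin \<le> lam \<and> lam \<le> lmax \<and> 0 < lam"
    then have lp: "lam > 0" by simp
    have m1: "min lam lmax = lam" "min lam lmin = lmin" using h by auto
    have m2: "min 1 (lmax / lam) = 1" "min 1 (lmin / lam) = lmin / lam"
      using h lp by (auto simp: min_def divide_le_eq_1 le_divide_eq_1)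
    show "precision lam P Qt (seqs V L) = \<rho> * lam + DD * F"
      using prec[OF lp] U W m1 lminDD by simp
    show "recall lam P Qt (seqs V L) = \<rho> + 1 / lam * (DD * F)"
      using rec[OF lp] U W m2 lminDD by simp
  next
    fix lam assume h: "0 < lam \<and> lam \<le> lmin"
    then have lp: "lam > 0" by simp
    have m1: "min lam lmax = lam" "min lam lmin = lam" using h WU by auto
    have m2: "min 1 (lmax / lam) = 1" "min 1 (lmin / lam) = 1"
      using h lp WU by (auto simp: min_def divide_le_eq_1 le_divide_eq_1)
    show "precision lam P Qt (seqs V L) = lam"
      using prec[OF lp] U W m1 by (simp add: algebra_simps)
    show "recall lam P Qt (seqs V L) = 1"
      using rec[OF lp] U W m2 by simp
  qed
qed

end
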